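(* For every integer $n\ge2$, the coefficient of $u\,v^{n+1}w^{n-2}$ in $P_{n/(n+1)}(u,v,w)$ (i.e. the coefficient at the lattice point $(1,n+1)$ of the Newton polygon) equals $7n-10$.
   Context: Markov polynomials. Let $x,y,z$ be indeterminates. Consider the set consisting of all rationals $\rho\in[0,1]$, each written in lowest terms $\rho=a/b$ with integers $a\ge 0$, $b\ge 1$, together with the formal symbol $1/0$. Define Laurent polynomials $M_\rho(x,y,z)$ recursively by $M_{1/0}=y$, $M_{0/1}=x$, $M_{1/1}=\frac{x^2+y^2}{z}$, and: whenever $a/b$, $c/d$ are in this set with $|ad-bc|=1$ and $(a+2c)/(b+2d)\in[0,1]$, then $M_{\frac{a+2c}{b+2d}}=\big(M_{c/d}^2+M_{\frac{a+c}{b+d}}^2\big)/M_{a/b}$. This determines $M_\rho$ for every rational $\rho\in[0,1]$. Numerator. For coprime $1\le a\le b$, $P_{a/b}(u,v,w)$ denotes the homogeneous polynomial of degree $a+b-1$ such that $M_{a/b}(x,y,z)=P_{a/b}(x^2,y^2,z^2)/(x^{a-1}y^{b-1}z^{a+b-1})$; its existence is known. *)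

theory Defs
  imports Complex_Main "HOL-Computational_Algebra.Polynomial"
begin

text \<open>Markov polynomials M_rho, rho = a/b encoded as the pair (a,b) of naturals
(the formal symbol 1/0 is the pair (1,0)). The Laurent polynomial M_rho(x,y,z) is
represented by its values as a real function of positive reals x,y,z.\<close>

inductive Markov_rel :: "nat \<times> nat \<Rightarrow> (real \<Rightarrow> real \<Rightarrow> real \<Rightarrow> real) \<Rightarrow> bool" where
  base_inf: "Markov_rel (1, 0) (\<lambda>x y z. y)"
| base_0: "Markov_rel (0, 1) (\<lambda>x y z. x)"
| base_1: "Markov_rel (1, 1) (\<lambda>x y z. (x\<^sup>2 + y\<^sup>2) / z)"
| step: "\<lbrakk> Markov_rel (a, b) f; Markov_rel (c, d) g; Markov_rel (a + c, b + d) h;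
           \<bar>int a * int d - int b * int c\<bar> = 1; a + 2 * c \<le> b + 2 * d \<rbrakk>
         \<Longrightarrow> Markov_rel (a + 2 * c, b + 2 * d)
               (\<lambda>x y z. ((g x y z)\<^sup>2 + (h x y z)\<^sup>2) / f x y z)"

text \<open>Trivariate integer polynomials: P :: int poly poly poly, outer variable u,
then v, innermost w.\<close>

definition eval3 :: "int poly poly poly \<Rightarrow> real \<Rightarrow> real \<Rightarrow> real \<Rightarrow> real" where
  "eval3 P u v w =
     poly (map_poly (\<lambda>q. poly (map_poly (\<lambda>r. poly (map_poly of_int r) w) q) v) P) u"

definition coeff3 :: "int poly poly poly \<Rightarrow> nat \<Rightarrow> nat \<Rightarrow> nat \<Rightarrow> int" where
  "coeff3 P i j k = coeff (coeff (coeff P i) j) k"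

end

theory Submission
  imports Defs
begin


lemma arith_key:
  fixes k a b c d :: nat
  assumes "k \<ge> 2" "a + 2*c = k" "b + 2*d = k+1" "\<bar>int a * int d - int b * int c\<bar> = 1"
  shows "c = 1 \<and> d = 1"
proof -
  have ia: "int a = int k - 2*int c" using assms(2) by simp
  have ib: "int b = int k + 1 - 2*int d" using assms(3) by simp
  have det: "int a * int d - int b * int c = int k * (int d - int c) - int c"
    unfolding ia ib by (simp add: algebra_simps)
  define e where "e = int d - int c"
  have h: "\<bar>int k * e - int c\<bar> = 1" using assms(4) det e_def by simp
  have c2: "2 * int c \<le> int k" using assms(2) by simp
  have d2: "2 * int d \<le> int k + 1" using assms(3) by simp
  consider "e \<ge> 1" | "e \<le> -1" | "e = 0" by linarith
  then show ?thesis
  proof cases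
    case 1
    have k1: "int k * e \<ge> int k * 1" using 1 by (intro mult_left_mono) auto
    show ?thesis
    proof (cases "e = 1")
      case True
      then show ?thesis using h c2 d2 e_def assms(1) by auto
    next
      case False
      then have "int k * e \<ge> int k * 2" using 1 by (intro mult_left_mono) auto
      then show ?thesis using h c2 d2 e_def assms(1) by linarith
    qed
  next
    case 2
    have "int k * e \<le> int k * (-1)" using 2 by (intro mult_left_mono) auto
    then show ?thesis using h c2 d2 e_def assms(1) by linarith
  next
    case 3
    then show ?thesis using h e_def by auto
  qed
qed

lemma rel_10: "Markov_rel (1,0) f \<Longrightarrow> f = (\<lambda>x y z. y)"
  by (erule Markov_rel.cases) auto

lemma rel_01: "Markov_rel (0,1) f \<Longrightarrow> f = (\<lambda>x y z. x)"
  by (erule Markov_rel.cases) auto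

lemma rel_11: "Markov_rel (1,1) f \<Longrightarrow> f = (\<lambda>x y z. (x\<^sup>2 + y\<^sup>2) / z)"
proof (erule Markov_rel.cases)
  fix a b c d :: nat
  assume "(1::nat, 1::nat) = (a + 2 * c, b + 2 * d)" "\<bar>int a * int d - int b * int c\<bar> = 1"
  then show "f = (\<lambda>x y z. (x\<^sup>2 + y\<^sup>2) / z)" by (cases c; cases d) auto
qed auto

fun X :: "nat \<Rightarrow> real \<Rightarrow> real \<Rightarrow> real \<Rightarrow> real" where
  "X 0 x y z = x"
| "X (Suc 0) x y z = (x\<^sup>2 + ((x\<^sup>2 + y\<^sup>2) / z)\<^sup>2) / y"
| "X (Suc (Suc k)) x y z = (((x\<^sup>2 + y\<^sup>2) / z)\<^sup>2 + (X (Suc k) x y z)\<^sup>2) / X k x y z"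

lemma rel_X: "Markov_rel (k, k+1) f \<Longrightarrow> x > 0 \<Longrightarrow> y > 0 \<Longrightarrow> z > 0 \<Longrightarrow> f x y z = X k x y z"
proof (induction k arbitrary: f rule: less_induct)
  case (less k)
  consider "k = 0" | "k = 1" | "k \<ge> 2" by linarith
  then show ?case
  proof cases
    case 1
    from less.prems(1)[unfolded 1] show ?thesis
    proof (cases rule: Markov_rel.cases)
      case (step a b f' c d g h)
      then have "a = 0" "c = 0" by auto
      moreover have "\<bar>int a * int d - int b * int c\<bar> = 1" using step by blast
      ultimately show ?thesis by simp
    qed (use 1 in auto)
  next
    case 2
    from less.prems(1)[unfolded 2] show ?thesis
    proof (cases rule: Markov_rel.cases)
      case (step a b f' c d g h)
      then have "a = 1" "c = 0" by auto
      with step have d1: "d = 1" "b = 0" by auto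
      have "Markov_rel (1,0) f'" "Markov_rel (0,1) g" "Markov_rel (1,1) h"
        using step \<open>a = 1\<close> \<open>c = 0\<close> d1 by simp_all
      then have F: "f' = (\<lambda>x y z. y)" "g = (\<lambda>x y z. x)" "h = (\<lambda>x y z. (x\<^sup>2 + y\<^sup>2) / z)"
        by (auto intro: rel_10 rel_01 rel_11)
      show ?thesis using step F 2 \<open>a = 1\<close> \<open>c = 0\<close> by simp
    qed auto
  next
    case 3
    from less.prems(1) show ?thesis
    proof (cases rule: Markov_rel.cases)
      case (step a b f' c d g h)
      then have "c = 1 \<and> d = 1" using arith_key[OF 3, of a c b d] by auto
      then have cd: "c = 1" "d = 1" by auto
      with step have ab: "a = k - 2" "b = k - 1" by auto
      obtain j where j: "k = Suc (Suc j)" using 3 by (metis add_2_eq_Suc le_Suc_ex)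
      have r1: "Markov_rel (a, b) f'" "Markov_rel (c, d) g" "Markov_rel (a + c, b + d) h"
        using step by blast+
      have e1: "(a, b) = (j, j + 1)" "(a + c, b + d) = (Suc j, Suc j + 1)" "(c,d) = (1,1)"
        using ab cd j by auto
      have f': "f' x y z = X j x y z"
        using less.IH[of j f'] r1(1)[unfolded e1] j less.prems by auto
      have h: "h x y z = X (Suc j) x y z"
        using less.IH[of "Suc j" h] r1(3)[unfolded e1] j less.prems by auto
      have g: "g = (\<lambda>x y z. (x\<^sup>2 + y\<^sup>2) / z)" using r1(2)[unfolded e1] by (rule rel_11)
      have fe: "f = (\<lambda>x y z. ((g x y z)\<^sup>2 + (h x y z)\<^sup>2) / f' x y z)" using step by blast
      show ?thesis unfolding fe using f' h g j by simp
    qed (use 3 in auto)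
  qed
qed



lemma map_poly_add_hom:
  assumes "\<And>a b. f (a+b) = f a + f b" "f 0 = 0"
  shows "map_poly f (p+q) = map_poly f p + map_poly f q"
  by (rule poly_eqI) (simp add: coeff_map_poly assms)

lemma map_poly_mult_hom:
  fixes f :: "'a::comm_ring_1 \<Rightarrow> 'b::comm_ring_1"
  assumes "\<And>a b. f (a+b) = f a + f b" "f 0 = 0" "\<And>a b. f (a*b) = f a * f b"
  shows "map_poly f (p*q) = map_poly f p * map_poly f q"
proof (rule poly_eqI)
  fix n
  have "coeff (map_poly f (p*q)) n = f (\<Sum>i\<le>n. coeff p i * coeff q (n-i))"
    by (simp add: coeff_map_poly assms coeff_mult)
  also have "\<dots> = (\<Sum>i\<le>n. f (coeff p i * coeff q (n-i)))"
    using sum_comp_morphism[of f "\<lambda>i. coeff p i * coeff q (n-i)" "{..n}", OF assms(2) assms(1)]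
    by (simp add: o_def)
  also have "\<dots> = coeff (map_poly f p * map_poly f q) n"
    by (simp add: coeff_mult coeff_map_poly assms)
  finally show "coeff (map_poly f (p*q)) n = coeff (map_poly f p * map_poly f q) n" .
qed

definition h1 :: "real \<Rightarrow> int poly \<Rightarrow> real" where "h1 w r = poly (map_poly of_int r) w"
definition h2 :: "real \<Rightarrow> real \<Rightarrow> int poly poly \<Rightarrow> real" where
  "h2 v w q = poly (map_poly (h1 w) q) v"

lemma h1_hom: "h1 w (a+b) = h1 w a + h1 w b" "h1 w 0 = 0" "h1 w (a*b) = h1 w a * h1 w b"
  by (simp_all add: h1_def map_poly_add_hom map_poly_mult_hom)

lemma h2_hom: "h2 v w (a+b) = h2 v w a + h2 v w b" "h2 v w 0 = 0" "h2 v w (a*b) = h2 v w a * h2 v w b"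
  by (simp_all add: h2_def map_poly_add_hom map_poly_mult_hom h1_hom)

lemma eval3_alt: "eval3 P u v w = poly (map_poly (h2 v w) P) u"
  unfolding eval3_def h2_def h1_def by simp

lemma eval3_add: "eval3 (p+q) u v w = eval3 p u v w + eval3 q u v w"
  by (simp add: eval3_alt map_poly_add_hom h2_hom)
lemma eval3_mult: "eval3 (p*q) u v w = eval3 p u v w * eval3 q u v w"
  by (simp add: eval3_alt map_poly_mult_hom h2_hom)

definition UU :: "int poly poly poly" where "UU = [:0,1:]"
definition VV :: "int poly poly poly" where "VV = [:[:0,1:]:]"
definition WW :: "int poly poly poly" where "WW = [:[:[:0,1:]:]:]"

lemma h1_1: "h1 w 1 = 1" by (simp add: h1_def)
lemma h2_1: "h2 v w 1 = 1" by (simp add: h2_def h1_1)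
lemma h1_X: "h1 w [:0,1:] = w" by (simp add: h1_def map_poly_pCons)
lemma h2_X: "h2 v w [:0,1:] = v" by (simp add: h2_def map_poly_pCons h1_hom h1_1)
lemma h2_W: "h2 v w [:[:0,1:]:] = w" by (simp add: h2_def map_poly_pCons h1_hom h1_X)
lemma eval3_UU: "eval3 UU u v w = u" by (simp add: eval3_alt UU_def map_poly_pCons h2_hom h2_1)
lemma eval3_VV: "eval3 VV u v w = v" by (simp add: eval3_alt VV_def map_poly_pCons h2_hom h2_X)
lemma eval3_WW: "eval3 WW u v w = w" by (simp add: eval3_alt WW_def map_poly_pCons h2_hom h2_W)
lemma eval3_1: "eval3 1 u v w = 1" by (simp add: eval3_alt h2_def h1_def)
lemma eval3_pow: "eval3 (p^n) u v w = eval3 p u v w ^ n"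
  by (induction n) (simp_all add: eval3_mult eval3_1)

definition AA :: "int poly poly poly" where "AA = (UU+VV)*(UU+VV+WW)"
definition BB :: "int poly poly poly" where "BB = UU*VV*WW^2"

fun Q :: "nat \<Rightarrow> int poly poly poly" where
  "Q 0 = 1"
| "Q (Suc 0) = UU*WW + (UU+VV)^2"
| "Q (Suc (Suc k)) = AA * Q (Suc k) - BB * Q k"

lemma Q_rec: "Q (Suc (Suc k)) + BB * Q k = AA * Q (Suc k)" by simp

lemma X_pos: "x > 0 \<Longrightarrow> y > 0 \<Longrightarrow> z > 0 \<Longrightarrow> X k x y z > 0"
  by (induction k x y z rule: X.induct) (auto intro!: divide_pos_pos add_pos_nonneg)

lemma X_lin:
  assumes "x > 0" "y > 0" "z > 0"
  shows "X (Suc (Suc k)) x y z + X k x y z =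
         ((x\<^sup>2 + y\<^sup>2 + ((x\<^sup>2 + y\<^sup>2) / z)\<^sup>2) / (x*y)) * X (Suc k) x y z"
proof (induction k)
  case 0
  define m where "m = (x\<^sup>2 + y\<^sup>2) / z"
  define b where "b = X 1 x y z"
  have b: "x\<^sup>2 + m\<^sup>2 = b * y" unfolding b_def m_def using assms by simp
  have bp: "b > 0" unfolding b_def by (rule X_pos[OF assms])
  have "X 2 x y z + X 0 x y z = (m\<^sup>2 + b\<^sup>2) / x + x"
    unfolding b_def m_def by (simp add: numeral_2_eq_2)
  also have "\<dots> = (x\<^sup>2 + m\<^sup>2 + b\<^sup>2) / x" using assms by (simp add: field_simps power2_eq_square)
  also have "\<dots> = b * (y + b) / x" unfolding b by (simp add: algebra_simps power2_eq_square)
  also have "\<dots> = ((x\<^sup>2 + y\<^sup>2 + m\<^sup>2) / (x*y)) * b"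
  proof -
    have "x\<^sup>2 + y\<^sup>2 + m\<^sup>2 = y * (y + b)" using b by (simp add: algebra_simps power2_eq_square)
    then show ?thesis using assms by (simp add: field_simps)
  qed
  finally show ?case unfolding b_def m_def by (simp add: numeral_2_eq_2)
next
  case (Suc k)
  define m where "m = (x\<^sup>2 + y\<^sup>2) / z"
  define T where "T = (x\<^sup>2 + y\<^sup>2 + m\<^sup>2) / (x*y)"
  define a where "a = X k x y z"
  define b where "b = X (Suc k) x y z"
  define c where "c = X (Suc (Suc k)) x y z"
  have pa: "a > 0" "b > 0" using X_pos assms a_def b_def by auto
  have hc: "c = (m\<^sup>2 + b\<^sup>2) / a" unfolding c_def a_def b_def m_def by simp
  have IH: "c + a = T * b" using Suc unfolding a_def b_def c_def T_def m_def by simp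
  have "X (Suc (Suc (Suc k))) x y z = (m\<^sup>2 + c\<^sup>2) / b" unfolding c_def b_def m_def by simp
  moreover have "(m\<^sup>2 + c\<^sup>2) / b + b = T * c"
  proof -
    have m2: "m\<^sup>2 = c*a - b\<^sup>2" using hc pa by (simp add: field_simps)
    have "(m\<^sup>2 + c\<^sup>2) / b + b = c * (a + c) / b" using pa m2 by (simp add: field_simps power2_eq_square)
    also have "\<dots> = T * c" using IH pa by (simp add: field_simps)
    finally show ?thesis .
  qed
  ultimately show ?case unfolding c_def b_def T_def m_def by simp
qed

lemma X_Q:
  assumes "x > 0" "y > 0" "z > 0"
  shows "X k x y z * (x^k * y^k * z^(2*k)) = x * eval3 (Q k) (x\<^sup>2) (y\<^sup>2) (z\<^sup>2)"
proof (induction k rule: Q.induct)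
  case 1
  then show ?case by (simp add: eval3_1)
next
  case 2
  have e: "eval3 (Q 1) (x\<^sup>2) (y\<^sup>2) (z\<^sup>2) = x\<^sup>2 * z\<^sup>2 + (x\<^sup>2 + y\<^sup>2)^2"
    by (simp only: Q.simps One_nat_def eval3_add eval3_mult eval3_pow eval3_UU eval3_VV eval3_WW)
  show ?case using assms unfolding One_nat_def[symmetric] e
    by (simp add: field_simps power2_eq_square)
next
  case (3 k)
  define T where "T = (x\<^sup>2 + y\<^sup>2 + ((x\<^sup>2 + y\<^sup>2) / z)\<^sup>2) / (x*y)"
  have lin: "X (Suc (Suc k)) x y z = T * X (Suc k) x y z - X k x y z"
    using X_lin[OF assms, of k] unfolding T_def by linarith
  have eA: "eval3 AA (x\<^sup>2) (y\<^sup>2) (z\<^sup>2) = T * x * y * z\<^sup>2"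
    using assms unfolding T_def AA_def eval3_add eval3_mult eval3_UU eval3_VV eval3_WW
    by (simp add: field_simps power2_eq_square)
  have eB: "eval3 BB (x\<^sup>2) (y\<^sup>2) (z\<^sup>2) = x\<^sup>2 * y\<^sup>2 * (z\<^sup>2)\<^sup>2"
    unfolding BB_def by (simp add: eval3_mult eval3_pow eval3_UU eval3_VV eval3_WW)
  have eQ: "eval3 (Q (Suc (Suc k))) (x\<^sup>2) (y\<^sup>2) (z\<^sup>2) =
      eval3 AA (x\<^sup>2) (y\<^sup>2) (z\<^sup>2) * eval3 (Q (Suc k)) (x\<^sup>2) (y\<^sup>2) (z\<^sup>2)
      - eval3 BB (x\<^sup>2) (y\<^sup>2) (z\<^sup>2) * eval3 (Q k) (x\<^sup>2) (y\<^sup>2) (z\<^sup>2)"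
  proof -
    have "eval3 (Q (Suc (Suc k)) + BB * Q k) (x\<^sup>2) (y\<^sup>2) (z\<^sup>2) = eval3 (AA * Q (Suc k)) (x\<^sup>2) (y\<^sup>2) (z\<^sup>2)"
      by (simp only: Q_rec)
    then show ?thesis unfolding eval3_add eval3_mult by linarith
  qed
  have I1: "X (Suc k) x y z * (x^Suc k * y^Suc k * z^(2*Suc k)) = x * eval3 (Q (Suc k)) (x\<^sup>2) (y\<^sup>2) (z\<^sup>2)"
    using 3(1) by simp
  have I0: "X k x y z * (x^k * y^k * z^(2*k)) = x * eval3 (Q k) (x\<^sup>2) (y\<^sup>2) (z\<^sup>2)"
    using 3(2) by simp
  have "X (Suc (Suc k)) x y z * (x^Suc (Suc k) * y^Suc (Suc k) * z^(2*Suc (Suc k)))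
      = (T*x*y*z\<^sup>2) * (X (Suc k) x y z * (x^Suc k * y^Suc k * z^(2*Suc k)))
        - (x\<^sup>2 * y\<^sup>2 * (z\<^sup>2)\<^sup>2) * (X k x y z * (x^k * y^k * z^(2*k)))"
    unfolding lin by (simp add: algebra_simps power2_eq_square)
  also have "\<dots> = x * eval3 (Q (Suc (Suc k))) (x\<^sup>2) (y\<^sup>2) (z\<^sup>2)"
    unfolding I1 I0 eQ eA eB by (simp add: algebra_simps)
  finally show ?case .
qed



lemma real_poly_eq_pos:
  fixes p q :: "real poly"
  assumes "\<And>x. x > 0 \<Longrightarrow> poly p x = poly q x"
  shows "p = q"
proof (rule ccontr)
  assume "p \<noteq> q"
  then have "p - q \<noteq> 0" by simp
  then have "finite {x. poly (p - q) x = 0}" by (rule poly_roots_finite)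
  moreover have "{0::real<..} \<subseteq> {x. poly (p - q) x = 0}" using assms by auto
  ultimately have "finite {0::real<..}" by (rule finite_subset[rotated])
  then show False using infinite_Ioi by blast
qed

lemma h1_inj:
  assumes "\<And>w. w > 0 \<Longrightarrow> h1 w a = h1 w b"
  shows "a = b"
proof -
  have "map_poly (of_int :: int \<Rightarrow> real) a = map_poly of_int b"
    by (rule real_poly_eq_pos) (use assms in \<open>simp add: h1_def\<close>)
  then have "\<And>j. (of_int (coeff a j) :: real) = of_int (coeff b j)"
    by (metis coeff_map_poly of_int_0)
  then show ?thesis by (simp add: poly_eq_iff)
qed

lemma h2_inj:
  assumes "\<And>v w. v > 0 \<Longrightarrow> w > 0 \<Longrightarrow> h2 v w a = h2 v w b"
  shows "a = b"
proof -
  have "\<And>w. w > 0 \<Longrightarrow> map_poly (h1 w) a = map_poly (h1 w) b"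
    by (rule real_poly_eq_pos) (use assms in \<open>simp add: h2_def\<close>)
  then have "\<And>w j. w > 0 \<Longrightarrow> h1 w (coeff a j) = h1 w (coeff b j)"
    by (metis coeff_map_poly h1_hom(2))
  then have "\<And>j. coeff a j = coeff b j" by (metis h1_inj)
  then show ?thesis by (simp add: poly_eq_iff)
qed

lemma eval3_inj:
  assumes "\<And>u v w. u > 0 \<Longrightarrow> v > 0 \<Longrightarrow> w > 0 \<Longrightarrow> eval3 P u v w = eval3 P' u v w"
  shows "P = P'"
proof -
  have "\<And>v w. v > 0 \<Longrightarrow> w > 0 \<Longrightarrow> map_poly (h2 v w) P = map_poly (h2 v w) P'"
    by (rule real_poly_eq_pos) (use assms in \<open>simp add: eval3_alt\<close>)
  then have "\<And>v w j. v > 0 \<Longrightarrow> w > 0 \<Longrightarrow> h2 v w (coeff P j) = h2 v w (coeff P' j)"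
    by (metis coeff_map_poly h2_hom(2))
  then have "\<And>j. coeff P j = coeff P' j" by (metis h2_inj)
  then show ?thesis by (simp add: poly_eq_iff)
qed

lemma coeff_mult_1: "coeff (p*q) (Suc 0) = coeff p 0 * coeff q (Suc 0) + coeff p (Suc 0) * coeff q 0"
  by (simp add: coeff_mult)
lemma coeff_mult0: "coeff (p*q) 0 = coeff p 0 * coeff q 0"
  by (simp add: coeff_mult)

lemma coeff_power_1: "coeff (p^m) (Suc 0) = of_nat m * coeff p 0 ^ (m - 1) * coeff p (Suc 0)"
proof (induction m)
  case 0 then show ?case by simp
next
  case (Suc m)
  show ?case
  proof (cases m)
    case 0 then show ?thesis by simp
  next
    case (Suc m')
    show ?thesis using Suc.IH unfolding power_Suc coeff_mult_1 coeff_0_power Suc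
      by (simp add: algebra_simps coeff_mult0 coeff_0_power)
  qed
qed

definition vv :: "int poly poly" where "vv = [:0,1:]"
definition ww :: "int poly poly" where "ww = [:[:0,1:]:]"

lemma cUU: "coeff UU 0 = 0" "coeff UU (Suc 0) = 1" by (simp_all add: UU_def)
lemma cVV: "coeff VV 0 = vv" "coeff VV (Suc 0) = 0" by (simp_all add: VV_def vv_def)
lemma cWW: "coeff WW 0 = ww" "coeff WW (Suc 0) = 0" by (simp_all add: WW_def ww_def)

lemma cAA: "coeff AA 0 = vv * (vv + ww)" "coeff AA (Suc 0) = 2*vv + ww"
  by (simp_all add: AA_def coeff_mult_1 coeff_mult0 cUU cVV cWW)

lemma cBB: "coeff BB 0 = 0" "coeff BB (Suc 0) = vv * ww^2"
  by (simp_all add: BB_def coeff_mult_1 coeff_mult0 cUU cVV cWW power2_eq_square)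

lemma cQ0: "coeff (Q 0) 0 = 1" "coeff (Q 0) (Suc 0) = 0" by simp_all
lemma cQ1: "coeff (Q 1) 0 = vv^2" "coeff (Q 1) (Suc 0) = ww + 2*vv"
  by (simp_all add: coeff_mult_1 coeff_mult0 cUU cVV cWW power2_eq_square)

lemma cQ_rec0: "coeff (Q (Suc (Suc k))) 0 = vv * (vv + ww) * coeff (Q (Suc k)) 0"
  by (simp add: cAA cBB coeff_mult0)
lemma cQ_rec1: "coeff (Q (Suc (Suc k))) 1 = vv * (vv + ww) * coeff (Q (Suc k)) 1
    + (2*vv + ww) * coeff (Q (Suc k)) 0 - vv * ww^2 * coeff (Q k) 0"
  by (simp add: coeff_mult_1 coeff_mult0 cAA cBB)

lemma a_closed: "coeff (Q (Suc k)) 0 = vv^(k+2) * (vv + ww)^k"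
proof (induction k)
  case 0 then show ?case using cQ1 by (simp add: power2_eq_square)
next
  case (Suc k) show ?case unfolding cQ_rec0 Suc.IH by (simp add: algebra_simps)
qed

lemma b2: "coeff (Q 2) 1 = 4 * vv^2 * (vv + ww)"
  unfolding numeral_2_eq_2 cQ_rec1 using cQ1 cQ0
  by (simp add: algebra_simps power2_eq_square)

definition RR :: "nat \<Rightarrow> int poly poly" where
  "RR k = of_nat (2*k) * vv^2 + of_nat (3*k+2) * vv * ww + 4 * ww^2"

lemma b_closed: "coeff (Q (m+3)) 1 = vv^(m+3) * ((vv + ww)^m * RR (m+3))"
proof (induction m)
  case 0
  have "coeff (Q 3) 1 = vv * (vv + ww) * coeff (Q 2) 1 + (2*vv + ww) * coeff (Q 2) 0 - vv * ww^2 * coeff (Q 1) 0"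
    using cQ_rec1[of 1] by (simp add: numeral_3_eq_3 numeral_2_eq_2)
  also have "\<dots> = vv^3 * RR 3"
    using b2 a_closed[of 1] cQ1 unfolding RR_def
    by (simp add: numeral_2_eq_2 algebra_simps power2_eq_square power3_eq_cube)
  finally show ?case by simp
next
  case (Suc m)
  have e: "m + 3 = Suc (Suc (m+1))" by simp
  have "coeff (Q (Suc m + 3)) 1 = vv * (vv + ww) * coeff (Q (m+3)) 1
      + (2*vv + ww) * coeff (Q (m+3)) 0 - vv * ww^2 * coeff (Q (m+2)) 0"
    using cQ_rec1[of "m+2"] by (simp add: eval_nat_numeral)
  also have "\<dots> = vv^(Suc m+3) * ((vv + ww)^Suc m * RR (Suc m+3))"
  proof -
    have A3: "coeff (Q (m+3)) 0 = vv^(m+4) * (vv+ww)^(m+2)" using a_closed[of "m+2"] by (simp add: eval_nat_numeral)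
    have A2: "coeff (Q (m+2)) 0 = vv^(m+3) * (vv+ww)^(m+1)" using a_closed[of "m+1"] by (simp add: eval_nat_numeral)
    show ?thesis unfolding Suc.IH A3 A2 RR_def
      by (simp add: algebra_simps power2_eq_square eval_nat_numeral)
  qed
  finally show ?case .
qed



lemma vv_pow: "vv^n = monom 1 n" by (simp add: vv_def monom_altdef)

lemma t_pow: "([:0,1:]::int poly)^n = monom 1 n" by (simp add: monom_altdef)

lemma coeff_n2: "coeff3 (Q 2) 1 3 0 = 4"
proof -
  have "coeff (Q 2) 1 = monom 1 2 * (4 * (vv + ww))" using b2 vv_pow[of 2] by (simp add: algebra_simps)
  then have "coeff (coeff (Q 2) 1) 3 = coeff (4 * (vv + ww)) 1"
    by (simp add: coeff_monom_mult)
  also have "\<dots> = 4" by (simp add: vv_def ww_def numeral_poly)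
  finally show ?thesis by (simp add: coeff3_def numeral_poly)
qed

lemma coeff_big: "coeff3 (Q (m+3)) 1 (m+4) (m+1) = 7 * int m + 11"
proof -
  define t :: "int poly" where "t = [:0,1:]"
  have c0: "coeff (vv + ww) 0 = t" "coeff (vv + ww) (Suc 0) = 1" by (simp_all add: vv_def ww_def t_def)
  have r0: "coeff (RR (m+3)) 0 = 4 * t^2" and r1: "coeff (RR (m+3)) (Suc 0) = of_nat (3*(m+3)+2) * t"
    by (simp_all add: RR_def vv_def ww_def t_def coeff_mult_1 coeff_mult0 power2_eq_square of_nat_poly numeral_poly)
  have "coeff (coeff (Q (m+3)) 1) (m+4) = coeff ((vv + ww)^m * RR (m+3)) 1"
    using b_closed[of m] vv_pow[of "m+3"] by (simp add: coeff_monom_mult)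
  also have "\<dots> = t^m * (of_nat (3*(m+3)+2) * t) + of_nat m * t^(m-1) * (4 * t^2)"
    unfolding One_nat_def coeff_mult_1 coeff_power_1 coeff_0_power c0 r0 r1 by simp
  also have "\<dots> = of_nat (7*m+11) * t^(m+1)"
  proof (cases m)
    case 0 then show ?thesis by simp
  next
    case (Suc m') then show ?thesis by (simp add: algebra_simps power2_eq_square)
  qed
  also have "\<dots> = monom (of_nat (7*m+11)) (m+1)"
    unfolding t_def t_pow by (simp add: of_nat_poly smult_monom)
  finally have "coeff (coeff (Q (m+3)) 1) (m+4) = monom (of_nat (7*m+11)) (m+1)" .
  then show ?thesis by (simp add: coeff3_def)
qed



theorem mainTheorem19:
  fixes n :: nat and M :: "real \<Rightarrow> real \<Rightarrow> real \<Rightarrow> real" and P :: "int poly poly poly"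
  assumes "n \<ge> 2"
    and "Markov_rel (n, n + 1) M"
    and "\<forall>x y z. x > 0 \<longrightarrow> y > 0 \<longrightarrow> z > 0 \<longrightarrow>
           M x y z = eval3 P (x\<^sup>2) (y\<^sup>2) (z\<^sup>2) / (x ^ (n - 1) * y ^ n * z ^ (2 * n))"
  shows "coeff3 P 1 (n + 1) (n - 2) = 7 * int n - 10"
proof -
  have key: "eval3 P (x\<^sup>2) (y\<^sup>2) (z\<^sup>2) = eval3 (Q n) (x\<^sup>2) (y\<^sup>2) (z\<^sup>2)"
    if xyz: "x > 0" "y > 0" "z > 0" for x y z :: real
  proof -
    have MX: "M x y z = X n x y z" using rel_X[OF assms(2) xyz] .
    have D: "x ^ (n - 1) * y ^ n * z ^ (2 * n) > 0" using xyz by simp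
    have e1: "eval3 P (x\<^sup>2) (y\<^sup>2) (z\<^sup>2) = X n x y z * (x ^ (n - 1) * y ^ n * z ^ (2 * n))"
    proof -
      have "M x y z = eval3 P (x\<^sup>2) (y\<^sup>2) (z\<^sup>2) / (x ^ (n - 1) * y ^ n * z ^ (2 * n))"
        using assms(3) xyz by blast
      then have "X n x y z = eval3 P (x\<^sup>2) (y\<^sup>2) (z\<^sup>2) / (x ^ (n - 1) * y ^ n * z ^ (2 * n))"
        using MX by simp
      moreover have gen: "\<And>a b c::real. c > 0 \<Longrightarrow> a = b / c \<Longrightarrow> b = a * c" by simp
      ultimately show ?thesis using gen[OF D] by blast
    qed
    have xn: "x ^ n = x * x ^ (n - 1)" using assms(1) by (metis Suc_diff_1 not_numeral_le_zero not_gr0 power_Suc)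
    have "x * eval3 (Q n) (x\<^sup>2) (y\<^sup>2) (z\<^sup>2) = x * eval3 P (x\<^sup>2) (y\<^sup>2) (z\<^sup>2)"
      unfolding X_Q[OF xyz, of n, symmetric] e1 xn by (simp add: algebra_simps)
    then show ?thesis using xyz by simp
  qed
  have "P = Q n"
  proof (rule eval3_inj)
    fix u v w :: real assume "u > 0" "v > 0" "w > 0"
    then show "eval3 P u v w = eval3 (Q n) u v w"
      using key[of "sqrt u" "sqrt v" "sqrt w"] by simp
  qed
  then show ?thesis
  proof (cases "n = 2")
    case True
    then show ?thesis using \<open>P = Q n\<close> coeff_n2 by simp
  next
    case False
    then obtain m where m: "n = m + 3" using assms(1) by (metis add.commute le_Suc_ex add_2_eq_Suc' le_neq_implies_less Suc_leI numeral_3_eq_3 numeral_2_eq_2 plus_1_eq_Suc less_eq_Suc_le add_Suc_right)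
    have "coeff3 (Q (m+3)) 1 (m+4) (m+1) = 7 * int m + 11" by (rule coeff_big)
    then show ?thesis using \<open>P = Q n\<close> m by (simp add: eval_nat_numeral)
  qed
qed

end
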